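(* Let $V$ be a vector configuration of rank $r$. For every $s$ with $1\le s\le r-1$ there exists a subconfiguration $W\subseteq V$ of rank $s$ such that $\mathrm{DD}(V)=\mathrm{DD}(W)+\mathrm{DD}(V/W)$.
   Context: A vector configuration is a finite family (repetitions allowed) $U$ of vectors in a real vector space $E$; a subconfiguration is a subfamily, $\operatorname{rank}(U)=\dim\operatorname{lin}(U)$, cardinalities count multiplicities. The quotient $V/W$ is the configuration in $E/\operatorname{lin}(W)$ of the images of the elements of $V\setminus W$. Covector discrepancy: $\mathrm{DD}(U)=\max_f\big|\,|\{u\in U: f(u)>0\}|-|\{u\in U:f(u)<0\}|\,\big|$ over all linear functionals $f$ on $E$. *)

theory Defs
  imports "HOL-Analysis.Analysis"
begin

text \<open>A vector configuration is a finite index set I together with a map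
  v :: 'i => 'a into a real vector space (repetitions allowed since v need
  not be injective).  A subconfiguration is given by a subset J of I.\<close>

definition rank_conf :: "('i \<Rightarrow> 'a::real_vector) \<Rightarrow> 'i set \<Rightarrow> nat" where
  "rank_conf v I = dim (span (v ` I))"

definition imbalance :: "('a \<Rightarrow> real) \<Rightarrow> ('i \<Rightarrow> 'a) \<Rightarrow> 'i set \<Rightarrow> nat" where
  "imbalance f v I = nat \<bar>int (card {i\<in>I. f (v i) > 0}) - int (card {i\<in>I. f (v i) < 0})\<bar>"

definition DD :: "('i \<Rightarrow> 'a::real_vector) \<Rightarrow> 'i set \<Rightarrow> nat" where
  "DD v I = Max {imbalance f v I | f. linear f}"

text \<open>Covector discrepancy of the quotient V/W, where V = (v, I), W = (v, J):
  the configuration of images of the elements of I - J in E / lin(W).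
  Linear functionals on E / lin(W) are exactly the linear functionals on E
  vanishing on lin(W) (composition with the canonical projection), and the
  sign of such a functional on the image of v i is the sign of f (v i).\<close>
definition DD_quot :: "('i \<Rightarrow> 'a::real_vector) \<Rightarrow> 'i set \<Rightarrow> 'i set \<Rightarrow> nat" where
  "DD_quot v I J = Max {imbalance f v (I - J) | f. linear f \<and> (\<forall>w\<in>span (v ` J). f w = 0)}"

end

theory Submission
  imports Defs
begin

definition sig :: "('a \<Rightarrow> real) \<Rightarrow> ('i \<Rightarrow> 'a) \<Rightarrow> 'i set \<Rightarrow> real" where
  "sig f v A = (\<Sum>i\<in>A. sgn (f (v i)))"

definition DDS :: "('i \<Rightarrow> 'a::real_vector) \<Rightarrow> 'i set \<Rightarrow> 'a set \<Rightarrow> nat" where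
  "DDS v A S = Max {imbalance f v A | f. linear f \<and> (\<forall>w\<in>S. f w = 0)}"

lemma DD_eq: "DD v I = DDS v I {}"
  unfolding DD_def DDS_def by simp

lemma DDq_eq: "DD_quot v I J = DDS v (I - J) (span (v ` J))"
  unfolding DD_quot_def DDS_def by simp

lemma sig_card:
  assumes "finite A"
  shows "sig f v A = real (card {i\<in>A. f (v i) > 0}) - real (card {i\<in>A. f (v i) < 0})"
proof -
  have "sig f v A = (\<Sum>i\<in>A. (if f (v i) > 0 then 1 else 0) - (if f (v i) < 0 then 1 else 0))"
    unfolding sig_def by (intro sum.cong) (auto simp: sgn_real_def)
  also have "\<dots> = (\<Sum>i\<in>A. if f (v i) > 0 then 1 else 0) - (\<Sum>i\<in>A. if f (v i) < 0 then (1::real) else 0)"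
    by (simp add: sum_subtractf)
  also have "\<dots> = real (card {i\<in>A. f (v i) > 0}) - real (card {i\<in>A. f (v i) < 0})"
    using assms sum.inter_filter[OF assms, of "\<lambda>_. (1::real)" "\<lambda>i. f (v i) > 0"]
      sum.inter_filter[OF assms, of "\<lambda>_. (1::real)" "\<lambda>i. f (v i) < 0"] by simp
  finally show ?thesis .
qed

lemma imb_sig: "finite A \<Longrightarrow> real (imbalance f v A) = \<bar>sig f v A\<bar>"
  by (simp add: imbalance_def sig_card)

lemma imb_le: assumes "finite A" shows "imbalance f v A \<le> card A"
proof -
  have "card {i\<in>A. f (v i) > 0} \<le> card A" "card {i\<in>A. f (v i) < 0} \<le> card A"
    using assms by (auto intro: card_mono)
  thus ?thesis unfolding imbalance_def by linarith
qed

lemma DDS_fin: assumes "finite A"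
  shows "finite {imbalance f v A | f. linear f \<and> (\<forall>w\<in>S. f w = 0)}"
  by (rule finite_subset[of _ "{..card A}"]) (auto intro: imb_le[OF assms])

lemma lin_comb: "linear f \<Longrightarrow> linear g \<Longrightarrow> linear (\<lambda>x. f x + (c::real) * g x)"
  for f g :: "'a::real_vector \<Rightarrow> real"
  by (rule linearI) (simp_all add: linear_add linear_scale algebra_simps)

lemma lin_neg: "linear f \<Longrightarrow> linear (\<lambda>x. - f x)"
  for f :: "'a::real_vector \<Rightarrow> real"
  by (rule linearI) (simp_all add: linear_add linear_scale algebra_simps)

lemma sig_neg: "sig (\<lambda>y. - f y) v A = - sig f v A"
  unfolding sig_def by (simp add: sgn_minus sum_negf)

lemma DDS_ge:
  assumes "finite A" "linear f" "\<forall>w\<in>S. f w = 0"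
  shows "\<bar>sig f v A\<bar> \<le> real (DDS v A S)"
proof -
  have "imbalance f v A \<le> DDS v A S"
    unfolding DDS_def by (rule Max_ge[OF DDS_fin[OF assms(1)]]) (use assms in blast)
  hence "real (imbalance f v A) \<le> real (DDS v A S)" by simp
  thus ?thesis using imb_sig[OF assms(1), where f=f and v=v] by linarith
qed

lemma DDS_attain:
  assumes "finite A"
  shows "\<exists>f. linear f \<and> (\<forall>w\<in>S. f w = 0) \<and> sig f v A = real (DDS v A S)"
proof -
  have ne: "{imbalance f v A | f. linear f \<and> (\<forall>w\<in>S. f w = 0)} \<noteq> {}"
    using linear_zero by blast
  obtain f where f: "linear f" "\<forall>w\<in>S. f w = 0" "imbalance f v A = DDS v A S"
    using Max_in[OF DDS_fin[OF assms] ne] unfolding DDS_def by auto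
  hence a: "\<bar>sig f v A\<bar> = real (DDS v A S)" using imb_sig[OF assms, where f=f and v=v] by simp
  show ?thesis
  proof (cases "sig f v A \<ge> 0")
    case True thus ?thesis using f a by auto
  next
    case False
    thus ?thesis using f a lin_neg[OF f(1)] sig_neg[of f v A]
      by (intro exI[of _ "\<lambda>y. - f y"]) auto
  qed
qed

lemma sgn_small: "\<bar>c\<bar> < \<bar>a\<bar> \<Longrightarrow> sgn (a + c) = sgn (a::real)"
  by (auto simp: sgn_real_def)

lemma perturb:
  fixes a b :: "'i \<Rightarrow> real"
  assumes "finite A"
  shows "\<exists>\<epsilon>>0. \<forall>x\<in>A. a x \<noteq> 0 \<longrightarrow> sgn (a x + \<epsilon> * b x) = sgn (a x)"
proof -
  define M where "M = Max (insert 1 ((\<lambda>x. \<bar>b x\<bar> / \<bar>a x\<bar>) ` {x\<in>A. a x \<noteq> 0}))"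
  have fin: "finite (insert 1 ((\<lambda>x. \<bar>b x\<bar> / \<bar>a x\<bar>) ` {x\<in>A. a x \<noteq> 0}))" using assms by simp
  have M1: "1 \<le> M" unfolding M_def by (rule Max_ge[OF fin]) simp
  have Mb: "\<bar>b x\<bar> / \<bar>a x\<bar> \<le> M" if "x \<in> A" "a x \<noteq> 0" for x
    unfolding M_def by (rule Max_ge[OF fin]) (use that in auto)
  define \<epsilon> where "\<epsilon> = 1 / (2 * M)"
  have ep: "\<epsilon> > 0" using M1 by (simp add: \<epsilon>_def)
  have "sgn (a x + \<epsilon> * b x) = sgn (a x)" if "x \<in> A" "a x \<noteq> 0" for x
  proof (rule sgn_small)
    have "\<bar>b x\<bar> \<le> M * \<bar>a x\<bar>" using Mb[OF that] that(2) by (simp add: divide_le_eq)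
    hence "\<epsilon> * \<bar>b x\<bar> \<le> \<epsilon> * (M * \<bar>a x\<bar>)" using ep by (simp add: mult_left_mono)
    also have "\<dots> = \<bar>a x\<bar> / 2" using M1 by (simp add: \<epsilon>_def)
    also have "\<dots> < \<bar>a x\<bar>" using that(2) by simp
    finally show "\<bar>\<epsilon> * b x\<bar> < \<bar>a x\<bar>" using ep by (simp add: abs_mult)
  qed
  thus ?thesis using ep by blast
qed

lemma sig_perturb:
  assumes "finite A" "\<epsilon> > 0"
    "\<forall>x\<in>A. f (v x) \<noteq> 0 \<longrightarrow> sgn (f (v x) + \<epsilon> * h (v x)) = sgn (f (v x))"
  shows "sig (\<lambda>y. f y + \<epsilon> * h y) v A = sig f v A + sig h v {i\<in>A. f (v i) = 0}"
proof -
  have "sig (\<lambda>y. f y + \<epsilon> * h y) v A = (\<Sum>i\<in>A. sgn (f (v i)) + (if f (v i) = 0 then sgn (h (v i)) else 0))"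
    unfolding sig_def using assms by (intro sum.cong) (auto simp: sgn_mult)
  also have "\<dots> = sig f v A + sig h v {i\<in>A. f (v i) = 0}"
    unfolding sig_def by (simp add: sum.distrib sum.inter_filter[OF assms(1)])
  finally show ?thesis .
qed

lemma ext_fun:
  fixes x :: "'a::real_vector"
  assumes "x \<notin> span T"
  shows "\<exists>\<psi>::'a\<Rightarrow>real. linear \<psi> \<and> \<psi> x = 1 \<and> (\<forall>y\<in>span T. \<psi> y = 0)"
proof -
  obtain B where B: "B \<subseteq> T" "independent B" "T \<subseteq> span B"
    by (rule maximal_independent_subset)
  have sB: "span T = span B"
    using B span_mono[OF B(1)] span_minimal[OF B(3) subspace_span] by auto
  have xB: "x \<notin> span B" using assms sB by simp
  hence ind: "independent (insert x B)" using B(2) span_base[of x B] by (auto simp: independent_insert)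
  obtain g :: "'a \<Rightarrow> real" where g: "linear g" "\<forall>z\<in>insert x B. g z = (if z = x then 1 else 0)"
    using linear_independent_extend[OF ind, of "\<lambda>z. if z = x then (1::real) else 0"] by blast
  have "\<forall>y\<in>span T. g y = 0"
  proof
    fix y assume "y \<in> span T"
    hence "y \<in> span B" using sB by simp
    moreover have "\<And>z. z \<in> B \<Longrightarrow> g z = 0" using g(2) xB span_base by fastforce
    ultimately show "g y = 0" using linear_eq_0_on_span[OF g(1)] by blast
  qed
  thus ?thesis using g by auto
qed

lemma avoid:
  fixes v :: "'i \<Rightarrow> 'a::real_vector"
  assumes "finite A" "\<forall>i\<in>A. v i \<notin> span S"
  shows "\<exists>k::'a\<Rightarrow>real. linear k \<and> (\<forall>y\<in>span S. k y = 0) \<and> (\<forall>i\<in>A. k (v i) \<noteq> 0)"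
  using assms
proof (induction A rule: finite_induct)
  case empty show ?case by (intro exI[of _ "\<lambda>_. 0"]) (simp add: linear_zero)
next
  case (insert j A)
  then obtain k :: "'a \<Rightarrow> real" where k: "linear k" "\<forall>y\<in>span S. k y = 0" "\<forall>i\<in>A. k (v i) \<noteq> 0"
    by auto
  show ?case
  proof (cases "k (v j) = 0")
    case False thus ?thesis using k by auto
  next
    case True
    obtain \<psi> :: "'a \<Rightarrow> real" where \<psi>: "linear \<psi>" "\<psi> (v j) = 1" "\<forall>y\<in>span S. \<psi> y = 0"
      using ext_fun insert.prems by blast
    obtain \<epsilon> where e: "\<epsilon>>0" "\<forall>x\<in>A. k (v x) \<noteq> 0 \<longrightarrow> sgn (k (v x) + \<epsilon> * \<psi> (v x)) = sgn (k (v x))"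
      using perturb[OF insert.hyps(1), of "\<lambda>x. k (v x)" "\<lambda>x. \<psi> (v x)"] by blast
    have nz: "k (v i) + \<epsilon> * \<psi> (v i) \<noteq> 0" if "i \<in> insert j A" for i
    proof (cases "i = j")
      case True thus ?thesis using \<open>k (v j) = 0\<close> \<psi>(2) e(1) by simp
    next
      case False
      hence i: "i \<in> A" using that by simp
      have "sgn (k (v i) + \<epsilon> * \<psi> (v i)) = sgn (k (v i))" "k (v i) \<noteq> 0"
        using e(2) k(3) i by auto
      thus ?thesis by (auto simp: sgn_0_0)
    qed
    have l: "linear (\<lambda>y. k y + \<epsilon> * \<psi> y)" by (rule lin_comb[OF k(1) \<psi>(1)])
    have z: "\<forall>y\<in>span S. k y + \<epsilon> * \<psi> y = 0" using k(2) \<psi>(3) by simp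
    show ?thesis using l z nz by blast
  qed
qed

lemma gen_max:
  fixes v :: "'i \<Rightarrow> 'a::real_vector"
  assumes "finite A"
  shows "\<exists>f. linear f \<and> (\<forall>y\<in>span S. f y = 0) \<and> sig f v A = real (DDS v A S)
     \<and> (\<forall>i\<in>A. v i \<notin> span S \<longrightarrow> f (v i) \<noteq> 0)"
proof -
  obtain q where q: "linear q" "\<forall>w\<in>S. q w = 0" "sig q v A = real (DDS v A S)"
    using DDS_attain[OF assms] by blast
  have qs: "\<forall>y\<in>span S. q y = 0" using q(1) q(2) linear_eq_0_on_span by blast
  have fA: "finite {i\<in>A. v i \<notin> span S}" using assms by simp
  obtain k :: "'a \<Rightarrow> real" where k: "linear k" "\<forall>y\<in>span S. k y = 0"
      "\<forall>i\<in>{i\<in>A. v i \<notin> span S}. k (v i) \<noteq> 0"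
    using avoid[OF fA] by blast
  define Z where "Z = {i\<in>A. q (v i) = 0}"
  obtain e1 where e1: "e1>0" "\<forall>x\<in>A. q (v x) \<noteq> 0 \<longrightarrow> sgn (q (v x) + e1 * k (v x)) = sgn (q (v x))"
    using perturb[OF assms, of "\<lambda>x. q (v x)" "\<lambda>x. k (v x)"] by blast
  obtain e2 where e2: "e2>0" "\<forall>x\<in>A. q (v x) \<noteq> 0 \<longrightarrow> sgn (q (v x) + e2 * (- k (v x))) = sgn (q (v x))"
    using perturb[OF assms, of "\<lambda>x. q (v x)" "\<lambda>x. - k (v x)"] by blast
  have s1: "sig (\<lambda>y. q y + e1 * k y) v A = sig q v A + sig k v Z"
    unfolding Z_def using sig_perturb[OF assms e1(1), of q v k] e1(2) by blast
  have s2': "sig (\<lambda>y. q y + e2 * (- k y)) v A = sig q v A + sig (\<lambda>y. - k y) v Z"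
    unfolding Z_def using sig_perturb[OF assms e2(1), of q v "\<lambda>y. - k y"] e2(2) by blast
  have s2: "sig (\<lambda>y. q y + e2 * (- k y)) v A = sig q v A - sig k v Z"
    using s2' sig_neg[of k v Z] by simp
  have l1: "linear (\<lambda>y. q y + e1 * k y)" by (rule lin_comb[OF q(1) k(1)])
  have l2: "linear (\<lambda>y. q y + e2 * (- k y))" by (rule lin_comb[OF q(1) lin_neg[OF k(1)]])
  have v1: "\<forall>w\<in>S. q w + e1 * k w = 0"
  proof
    fix w assume "w \<in> S" hence "w \<in> span S" by (rule span_base)
    thus "q w + e1 * k w = 0" using qs k(2) by simp
  qed
  have v2: "\<forall>w\<in>S. q w + e2 * (- k w) = 0"
  proof
    fix w assume "w \<in> S" hence "w \<in> span S" by (rule span_base)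
    thus "q w + e2 * (- k w) = 0" using qs k(2) by simp
  qed
  have "\<bar>sig (\<lambda>y. q y + e1 * k y) v A\<bar> \<le> real (DDS v A S)"
    by (rule DDS_ge[OF assms l1 v1])
  moreover have "\<bar>sig (\<lambda>y. q y + e2 * (- k y)) v A\<bar> \<le> real (DDS v A S)"
    by (rule DDS_ge[OF assms l2 v2])
  ultimately have z: "sig k v Z = 0" using s1 s2 q(3) by linarith
  have nz: "\<forall>i\<in>A. v i \<notin> span S \<longrightarrow> q (v i) + e1 * k (v i) \<noteq> 0"
  proof (intro ballI impI)
    fix i assume i: "i \<in> A" "v i \<notin> span S"
    show "q (v i) + e1 * k (v i) \<noteq> 0"
    proof (cases "q (v i) = 0")
      case True
      have "k (v i) \<noteq> 0" using k(3) i by blast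
      thus ?thesis using True e1(1) by simp
    next
      case False
      hence "sgn (q (v i) + e1 * k (v i)) = sgn (q (v i))" using e1(2) i by blast
      thus ?thesis using False by (auto simp: sgn_0_0)
    qed
  qed
  have vs: "\<forall>y\<in>span S. q y + e1 * k y = 0" using qs k(2) by simp
  have sg: "sig (\<lambda>y. q y + e1 * k y) v A = real (DDS v A S)" using s1 z q(3) by simp
  show ?thesis using l1 vs sg nz by blast
qed

lemma sgn_ne: "x \<noteq> 0 \<Longrightarrow> y \<noteq> 0 \<Longrightarrow> sgn x \<noteq> sgn y \<Longrightarrow> x * y < (0::real)"
  by (auto simp: sgn_real_def mult_less_0_iff split: if_splits)

lemma ratio_lemma:
  fixes a b t :: real
  assumes "t > 0" "a * (a - t * b) < 0"
  shows "b \<noteq> 0" "0 < a / b" "a / b < t"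
proof -
  have aa: "a * a \<ge> 0" by simp
  have "a * a < t * (a * b)" using assms(2) by (simp add: algebra_simps)
  hence ab: "a * b > 0" using aa assms(1) by (smt (verit) mult_nonneg_nonpos)
  thus "b \<noteq> 0" by auto
  have a0: "a \<noteq> 0" using ab by auto
  have eq: "a / b = (a * a) / (a * b)" using a0 by simp
  have aa0: "a * a > 0" using a0 by (auto simp: zero_less_mult_iff)
  show "0 < a / b" unfolding eq by (rule divide_pos_pos[OF aa0 ab])
  show "a / b < t" unfolding eq
    by (subst pos_divide_less_eq[OF ab]) (use \<open>a * a < t * (a * b)\<close> in simp)
qed

lemma dimmono:
  fixes V W :: "'a::real_vector set"
  assumes "finite W" "V \<subseteq> span W"
  shows "dim V \<le> dim W"
proof -
  obtain B where B: "B \<subseteq> W" "independent B" "W \<subseteq> span B" "card B = dim W"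
    by (rule basis_exists)
  have "span W \<subseteq> span B" by (rule span_minimal[OF B(3) subspace_span])
  hence "V \<subseteq> span B" using assms(2) by blast
  moreover have "finite B" using B(1) assms(1) by (rule finite_subset)
  ultimately have "dim V \<le> card B" by (rule dim_le_card)
  thus ?thesis using B(4) by simp
qed

lemma diminsert:
  fixes S :: "'a::real_vector set"
  assumes "finite S" "x \<notin> span S"
  shows "dim (insert x S) = dim S + 1"
proof -
  obtain B where B: "B \<subseteq> S" "independent B" "S \<subseteq> span B" "card B = dim S"
    by (rule basis_exists)
  have fB: "finite B" using B(1) assms(1) by (rule finite_subset)
  have "span B \<subseteq> span S" by (rule span_mono[OF B(1)])
  hence xB: "x \<notin> span B" using assms(2) by blast
  hence xB': "x \<notin> B" using span_base by blast
  have ind: "independent (insert x B)" using B(2) xB xB' by (simp add: independent_insert)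
  have sub: "insert x S \<subseteq> span (insert x B)"
  proof -
    have "span B \<subseteq> span (insert x B)" by (rule span_mono) blast
    hence "S \<subseteq> span (insert x B)" using B(3) by blast
    moreover have "x \<in> span (insert x B)" by (rule span_base) simp
    ultimately show ?thesis by blast
  qed
  show ?thesis
    by (rule dim_unique[OF _ sub ind]) (use B(1) B(4) fB xB' in auto)
qed

lemma face_step:
  fixes v :: "'i \<Rightarrow> 'a::real_vector" and g :: "'a \<Rightarrow> real"
  shows "finite X \<Longrightarrow> linear g \<Longrightarrow> rank_conf v {x\<in>X. g (v x) = 0} < rank_conf v X \<Longrightarrow>
    \<exists>\<phi>. linear \<phi> \<and> {x\<in>X. g (v x) = 0} \<subseteq> {x\<in>X. \<phi> (v x) = 0} \<and>
      rank_conf v {x\<in>X. \<phi> (v x) = 0} = rank_conf v {x\<in>X. g (v x) = 0} + 1 \<and>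
      (\<forall>x\<in>X. \<phi> (v x) \<noteq> 0 \<longrightarrow> sgn (\<phi> (v x)) = sgn (g (v x)))"
proof (induction "card X" arbitrary: X g rule: less_induct)
  case less
  define Z where "Z = {x\<in>X. g (v x) = 0}"
  define k where "k = rank_conf v Z"
  have rk: "rank_conf v U = dim (v ` U)" for U by (simp add: rank_conf_def)
  have gZ0: "g x = 0" if "x \<in> v ` Z" for x using that by (auto simp: Z_def)
  have gZ: "\<forall>y\<in>span (v ` Z). g y = 0"
  proof
    fix y assume y: "y \<in> span (v ` Z)"
    show "g y = 0" by (rule linear_eq_0_on_span[OF less.prems(2) gZ0 y])
  qed
  have finZ: "finite (v ` Z)" using less.prems(1) by (simp add: Z_def)
  have kX: "k < rank_conf v X" using less.prems(3) unfolding k_def Z_def .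
  show ?case
  proof (cases "rank_conf v X = k + 1")
    case True
    have ZX: "Z \<subseteq> X" by (auto simp: Z_def)
    have e0: "{x\<in>X. (\<lambda>_. 0::real) (v x) = 0} = X" by simp
    have "linear (\<lambda>_. 0::real) \<and> Z \<subseteq> {x\<in>X. (\<lambda>_. 0::real) (v x) = 0} \<and>
      rank_conf v {x\<in>X. (\<lambda>_. 0::real) (v x) = 0} = rank_conf v Z + 1 \<and>
      (\<forall>x\<in>X. (\<lambda>_. 0::real) (v x) \<noteq> 0 \<longrightarrow> sgn ((\<lambda>_. 0::real) (v x)) = sgn (g (v x)))"
      unfolding e0 using ZX True linear_zero by (simp add: k_def)
    thus ?thesis unfolding Z_def by blast
  next
    case False
    hence big: "k + 2 \<le> rank_conf v X" using kX by simp
    obtain u where u: "u \<in> X" "v u \<notin> span (v ` Z)"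
    proof -
      have "\<not> v ` X \<subseteq> span (v ` Z)"
      proof
        assume "v ` X \<subseteq> span (v ` Z)"
        hence "dim (v ` X) \<le> dim (v ` Z)" by (intro dimmono) (use finZ in auto)
        thus False using big by (simp add: rk k_def)
      qed
      thus ?thesis using that by auto
    qed
    obtain u2 where u2: "u2 \<in> X" "v u2 \<notin> span (insert (v u) (v ` Z))"
    proof -
      have "\<not> v ` X \<subseteq> span (insert (v u) (v ` Z))"
      proof
        assume "v ` X \<subseteq> span (insert (v u) (v ` Z))"
        hence "dim (v ` X) \<le> dim (insert (v u) (v ` Z))" by (intro dimmono) (use finZ in auto)
        also have "\<dots> = k + 1" using diminsert[OF finZ u(2)] by (simp add: rk k_def)
        finally show False using big by (simp add: rk)
      qed
      thus ?thesis using that by auto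
    qed
    have u_notin: "v u \<notin> span (insert (v u2) (v ` Z))"
      using in_span_insert u(2) u2(2) by blast
    obtain \<psi> :: "'a \<Rightarrow> real" where \<psi>: "linear \<psi>" "\<psi> (v u) = 1"
        "\<forall>y\<in>span (insert (v u2) (v ` Z)). \<psi> y = 0"
      using ext_fun[OF u_notin] by blast
    have \<psi>Z: "\<psi> (v x) = 0" if "x \<in> Z" for x
      using \<psi>(3) span_base[of "v x" "insert (v u2) (v ` Z)"] that by auto
    have \<psi>u2: "\<psi> (v u2) = 0" using \<psi>(3) span_base[of "v u2" "insert (v u2) (v ` Z)"] by auto
    have gu: "g (v u) \<noteq> 0"
    proof
      assume "g (v u) = 0" hence "u \<in> Z" using u(1) by (simp add: Z_def)
      thus False using u(2) span_base[of "v u" "v ` Z"] by auto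
    qed
    have gu2: "g (v u2) \<noteq> 0"
    proof
      assume "g (v u2) = 0" hence "u2 \<in> Z" using u2(1) by (simp add: Z_def)
      hence "v u2 \<in> span (insert (v u) (v ` Z))" using span_base[of "v u2" "insert (v u) (v ` Z)"] by auto
      thus False using u2(2) by simp
    qed
    define c where "c = g (v u)"
    define d where "d x = c * \<psi> (v x)" for x
    define T where "T = (\<lambda>x. g (v x) / d x) ` {x\<in>X. d x \<noteq> 0 \<and> 0 < g (v x) / d x \<and> g (v x) / d x \<le> 1}"
    have du: "d u = c" using \<psi>(2) by (simp add: d_def)
    have uT: "1 \<in> T" unfolding T_def
      using u(1) du gu by (intro image_eqI[of _ _ u]) (auto simp: c_def)
    have finT: "finite T" using less.prems(1) by (simp add: T_def)
    define t where "t = Min T"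
    have t_in: "t \<in> T" unfolding t_def by (rule Min_in[OF finT]) (use uT in blast)
    have t_le: "\<And>y. y \<in> T \<Longrightarrow> t \<le> y" using finT by (simp add: t_def)
    obtain x0 where x0: "x0 \<in> X" "d x0 \<noteq> 0" "0 < g (v x0) / d x0" "g (v x0) / d x0 \<le> 1"
        "t = g (v x0) / d x0"
      using t_in unfolding T_def by blast
    have tpos: "0 < t" "t \<le> 1" using x0 by auto
    define \<phi>0 where "\<phi>0 y = g y + (- (t * c)) * \<psi> y" for y
    have lin0: "linear \<phi>0" unfolding \<phi>0_def by (rule lin_comb[OF less.prems(2) \<psi>(1)])
    have \<phi>0v: "\<phi>0 (v x) = g (v x) - t * d x" for x by (simp add: \<phi>0_def d_def)
    have \<phi>0Z: "\<phi>0 (v x) = 0" if "x \<in> Z" for x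
      using that \<psi>Z[OF that] by (simp add: \<phi>0_def Z_def)
    have gx0: "g (v x0) \<noteq> 0" using x0(3) by auto
    have \<phi>0x0: "\<phi>0 (v x0) = 0" using x0(2) by (simp add: \<phi>0v x0(5))
    have \<phi>0u2: "\<phi>0 (v u2) \<noteq> 0" using gu2 \<psi>u2 by (simp add: \<phi>0_def)
    have sgn0: "sgn (\<phi>0 (v x)) = sgn (g (v x))" if x: "x \<in> X" "\<phi>0 (v x) \<noteq> 0" for x
    proof (rule ccontr)
      assume ne: "sgn (\<phi>0 (v x)) \<noteq> sgn (g (v x))"
      have a0: "g (v x) \<noteq> 0"
      proof
        assume "g (v x) = 0" hence "x \<in> Z" using x(1) by (simp add: Z_def)
        thus False using \<phi>0Z x(2) by simp
      qed
      have "g (v x) * (g (v x) - t * d x) < 0"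
        using sgn_ne[OF a0 x(2)] ne by (simp add: \<phi>0v mult.commute)
      from ratio_lemma[OF tpos(1) this]
      have r: "d x \<noteq> 0" "0 < g (v x) / d x" "g (v x) / d x < t" .
      have "g (v x) / d x \<in> T" unfolding T_def using x(1) r tpos(2)
        by (intro image_eqI[of _ _ x]) auto
      thus False using t_le r(3) by fastforce
    qed
    define X' where "X' = {x\<in>X. \<phi>0 (v x) = 0}"
    have ZX': "Z \<subseteq> X'" using \<phi>0Z by (auto simp: X'_def Z_def)
    have x0X': "x0 \<in> X'" using x0(1) \<phi>0x0 by (simp add: X'_def)
    have x0Z: "x0 \<notin> Z" using gx0 by (simp add: Z_def)
    have u2X': "u2 \<notin> X'" using \<phi>0u2 by (simp add: X'_def)
    have cardlt: "card X' < card X"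
      using u2X' u2(1) less.prems(1) by (intro psubset_card_mono) (auto simp: X'_def)
    have finX': "finite X'" using less.prems(1) by (simp add: X'_def)
    have ZeqX': "{x\<in>X'. g (v x) = 0} = Z" using ZX' by (auto simp: X'_def Z_def)
    have x0sp: "v x0 \<notin> span (v ` Z)" using gZ gx0 by blast
    have "dim (insert (v x0) (v ` Z)) \<le> dim (v ` X')"
      using x0X' ZX' finX' by (intro dimmono) (auto intro: span_base)
    hence rklt: "rank_conf v {x\<in>X'. g (v x) = 0} < rank_conf v X'"
      using diminsert[OF finZ x0sp] by (simp add: ZeqX' rk)
    obtain \<psi>2 where \<psi>2: "linear \<psi>2" "Z \<subseteq> {x\<in>X'. \<psi>2 (v x) = 0}"
        "rank_conf v {x\<in>X'. \<psi>2 (v x) = 0} = k + 1"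
        "\<forall>x\<in>X'. \<psi>2 (v x) \<noteq> 0 \<longrightarrow> sgn (\<psi>2 (v x)) = sgn (g (v x))"
      using less.hyps[OF cardlt finX' less.prems(2) rklt] unfolding ZeqX' k_def by blast
    obtain \<epsilon> where e: "\<epsilon> > 0"
        "\<forall>x\<in>X. \<phi>0 (v x) \<noteq> 0 \<longrightarrow> sgn (\<phi>0 (v x) + \<epsilon> * \<psi>2 (v x)) = sgn (\<phi>0 (v x))"
      using perturb[OF less.prems(1), of "\<lambda>x. \<phi>0 (v x)" "\<lambda>x. \<psi>2 (v x)"] by blast
    define \<phi> where "\<phi> y = \<phi>0 y + \<epsilon> * \<psi>2 y" for y
    have lin: "linear \<phi>" unfolding \<phi>_def by (rule lin_comb[OF lin0 \<psi>2(1)])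
    have zeros: "{x\<in>X. \<phi> (v x) = 0} = {x\<in>X'. \<psi>2 (v x) = 0}"
    proof (intro set_eqI iffI)
      fix x assume "x \<in> {x\<in>X. \<phi> (v x) = 0}"
      hence x: "x \<in> X" "\<phi> (v x) = 0" by auto
      have "\<phi>0 (v x) = 0"
      proof (rule ccontr)
        assume n: "\<phi>0 (v x) \<noteq> 0"
        hence "sgn (\<phi> (v x)) = sgn (\<phi>0 (v x))" using e(2) x(1) by (simp add: \<phi>_def)
        thus False using n x(2) by (simp add: sgn_0_0)
      qed
      thus "x \<in> {x\<in>X'. \<psi>2 (v x) = 0}" using x e(1) by (simp add: X'_def \<phi>_def)
    next
      fix x assume "x \<in> {x\<in>X'. \<psi>2 (v x) = 0}"
      thus "x \<in> {x\<in>X. \<phi> (v x) = 0}" by (simp add: X'_def \<phi>_def)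
    qed
    have sg: "sgn (\<phi> (v x)) = sgn (g (v x))" if x: "x \<in> X" "\<phi> (v x) \<noteq> 0" for x
    proof (cases "\<phi>0 (v x) = 0")
      case True
      hence "x \<in> X'" using x(1) by (simp add: X'_def)
      moreover have "\<psi>2 (v x) \<noteq> 0" using x(2) True by (simp add: \<phi>_def)
      ultimately have "sgn (\<psi>2 (v x)) = sgn (g (v x))" using \<psi>2(4) by blast
      thus ?thesis using True e(1) by (simp add: \<phi>_def sgn_mult)
    next
      case False
      hence "sgn (\<phi> (v x)) = sgn (\<phi>0 (v x))" using e(2) x(1) by (simp add: \<phi>_def)
      thus ?thesis using sgn0[OF x(1) False] by simp
    qed
    show ?thesis
      using lin zeros \<psi>2(2) \<psi>2(3) sg unfolding Z_def[symmetric] k_def[symmetric]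
      by (intro exI[of _ \<phi>]) auto
  qed
qed

theorem mainTheorem13:
  fixes v :: "'i \<Rightarrow> 'a::real_vector" and I :: "'i set" and r s :: nat
  assumes "finite I"
    and "rank_conf v I = r"
    and "1 \<le> s" and "s \<le> r - 1"
  shows "\<exists>J\<subseteq>I. rank_conf v J = s \<and> DD v I = DD v J + DD_quot v I J"
proof -
  obtain f :: "'a \<Rightarrow> real" where f: "linear f" "sig f v I = real (DD v I)"
      "\<forall>i\<in>I. v i \<notin> span {} \<longrightarrow> f (v i) \<noteq> 0"
    using gen_max[OF assms(1), of "{}" v] unfolding DD_eq by blast
  have fnz: "f (v i) \<noteq> 0" if "i \<in> I" "v i \<noteq> 0" for i using f(3) that by simp
  have faces: "\<exists>g :: 'a \<Rightarrow> real. linear g \<and> rank_conf v {i\<in>I. g (v i) = 0} = k \<and>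
      (\<forall>i\<in>I. g (v i) \<noteq> 0 \<longrightarrow> sgn (g (v i)) = sgn (f (v i)))" if "k \<le> s" for k
    using that
  proof (induction k)
    case 0
    have "v ` {i\<in>I. f (v i) = 0} \<subseteq> span {}" using fnz by auto
    hence "dim (v ` {i\<in>I. f (v i) = 0}) \<le> dim ({}::'a set)" by (intro dimmono) auto
    moreover have "dim ({}::'a set) = 0" by (rule dim_unique[of "{}"]) (auto simp: independent_empty)
    ultimately have "rank_conf v {i\<in>I. f (v i) = 0} = 0" by (simp add: rank_conf_def)
    thus ?case using f(1) by blast
  next
    case (Suc k)
    then obtain g :: "'a \<Rightarrow> real" where g: "linear g" "rank_conf v {i\<in>I. g (v i) = 0} = k"
        "\<forall>i\<in>I. g (v i) \<noteq> 0 \<longrightarrow> sgn (g (v i)) = sgn (f (v i))" by auto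
    have lt: "rank_conf v {i\<in>I. g (v i) = 0} < rank_conf v I" using g(2) Suc.prems assms by simp
    obtain \<phi> :: "'a \<Rightarrow> real" where \<phi>: "linear \<phi>" "{x\<in>I. g (v x) = 0} \<subseteq> {x\<in>I. \<phi> (v x) = 0}"
        "rank_conf v {x\<in>I. \<phi> (v x) = 0} = rank_conf v {x\<in>I. g (v x) = 0} + 1"
        "\<forall>x\<in>I. \<phi> (v x) \<noteq> 0 \<longrightarrow> sgn (\<phi> (v x)) = sgn (g (v x))"
      using face_step[OF assms(1) g(1) lt] by blast
    have "\<forall>i\<in>I. \<phi> (v i) \<noteq> 0 \<longrightarrow> sgn (\<phi> (v i)) = sgn (f (v i))"
    proof (intro ballI impI)
      fix i assume i: "i \<in> I" "\<phi> (v i) \<noteq> 0"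
      hence "g (v i) \<noteq> 0" using \<phi>(2) by blast
      thus "sgn (\<phi> (v i)) = sgn (f (v i))" using \<phi>(4) g(3) i by simp
    qed
    thus ?case using \<phi>(1) \<phi>(3) g(2) by auto
  qed
  obtain g :: "'a \<Rightarrow> real" where g: "linear g" "rank_conf v {i\<in>I. g (v i) = 0} = s"
      "\<forall>i\<in>I. g (v i) \<noteq> 0 \<longrightarrow> sgn (g (v i)) = sgn (f (v i))"
    using faces[of s] by auto
  define W where "W = {i\<in>I. g (v i) = 0}"
  have WI: "W \<subseteq> I" by (auto simp: W_def)
  have finW: "finite W" by (rule finite_subset[OF WI assms(1)])
  have finD: "finite (I - W)" using assms(1) by simp
  have gW0: "g x = 0" if "x \<in> v ` W" for x using that by (auto simp: W_def)
  have gW: "\<forall>y\<in>span (v ` W). g y = 0"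
  proof
    fix y assume y: "y \<in> span (v ` W)"
    show "g y = 0" by (rule linear_eq_0_on_span[OF g(1) gW0 y])
  qed
  have notin: "\<forall>i\<in>I - W. v i \<notin> span (v ` W)"
  proof
    fix i assume "i \<in> I - W"
    hence "g (v i) \<noteq> 0" by (simp add: W_def)
    thus "v i \<notin> span (v ` W)" using gW by blast
  qed
  have split: "sig F v I = sig F v W + sig F v (I - W)" for F
    unfolding sig_def using sum.subset_diff[OF WI assms(1), of "\<lambda>i. sgn (F (v i))"] by simp
  have A1: "sig f v W \<le> real (DD v W)"
    using DDS_ge[OF finW f(1), of "{}" v] unfolding DD_eq by simp
  have A2: "sig f v (I - W) = sig g v (I - W)"
    unfolding sig_def using g(3) by (intro sum.cong) (auto simp: W_def)
  have A3: "sig g v (I - W) \<le> real (DD_quot v I W)"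
    using DDS_ge[OF finD g(1) gW, of v] unfolding DDq_eq by simp
  have A: "real (DD v I) \<le> real (DD v W) + real (DD_quot v I W)"
    using split[of f] f(2) A1 A2 A3 by linarith
  obtain h :: "'a \<Rightarrow> real" where h: "linear h" "sig h v W = real (DD v W)"
    using DDS_attain[OF finW, of "{}" v] unfolding DD_eq by blast
  obtain q :: "'a \<Rightarrow> real" where q: "linear q" "\<forall>y\<in>span (span (v ` W)). q y = 0"
      "sig q v (I - W) = real (DDS v (I - W) (span (v ` W)))"
      "\<forall>i\<in>I - W. v i \<notin> span (span (v ` W)) \<longrightarrow> q (v i) \<noteq> 0"
    using gen_max[OF finD, of "span (v ` W)" v] by blast
  have qW: "q (v i) = 0" if "i \<in> W" for i
    using q(2) span_base[of "v i" "v ` W"] that by (simp add: span_span)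
  have qnz: "q (v i) \<noteq> 0" if "i \<in> I - W" for i using q(4) notin that by (simp add: span_span)
  obtain \<epsilon> where e: "\<epsilon> > 0" "\<forall>x\<in>I. q (v x) \<noteq> 0 \<longrightarrow> sgn (q (v x) + \<epsilon> * h (v x)) = sgn (q (v x))"
    using perturb[OF assms(1), of "\<lambda>x. q (v x)" "\<lambda>x. h (v x)"] by blast
  define F where "F y = q y + \<epsilon> * h y" for y
  have linF: "linear F" unfolding F_def by (rule lin_comb[OF q(1) h(1)])
  have B1: "sig F v W = sig h v W"
    unfolding sig_def using qW e(1) by (intro sum.cong) (auto simp: F_def sgn_mult)
  have B2: "sig F v (I - W) = sig q v (I - W)"
    unfolding sig_def using e(2) qnz by (intro sum.cong) (auto simp: F_def)
  have B3: "sig F v I \<le> real (DD v I)"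
    using DDS_ge[OF assms(1) linF, of "{}" v] unfolding DD_eq by simp
  have B: "real (DD v W) + real (DD_quot v I W) \<le> real (DD v I)"
    using split[of F] B1 B2 B3 h(2) q(3) unfolding DDq_eq by linarith
  have "DD v I = DD v W + DD_quot v I W" using A B by linarith
  thus ?thesis using WI g(2) unfolding W_def by blast
qed

end
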